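(* Let $E$ be a finite set, $\mathcal{Q}\subseteq 2^E$ a weakly Rayleigh set-system, and $A,B\in\mathcal{Q}$ with $A\cap B=\varnothing$. For every two-element set $\{e,f\}\subseteq B$ and every $g\in A$, at least one of $\mathcal{Q}^f_{eg}$ or $\mathcal{Q}^e_{fg}$ is nonempty.
   Context: For $\omega:2^E\to[0,\infty)$ not identically zero, $Z(\omega;\mathbf{y})=\sum_S\omega(S)\prod_{e\in S}y_e$; with subscripts denoting partial derivatives, $Z$ is Rayleigh if $Z_eZ_f-Z_{ef}Z\ge0$ for all distinct $e,f$ and all positive $\mathbf{y}$. $\mathcal{Q}$ is weakly Rayleigh if some $\omega\ge0$ with $\{S:\omega(S)>0\}=\mathcal{Q}$ has $Z(\omega;\mathbf{y})$ Rayleigh. Notation: $\mathcal{Q}^f_{eg}=\{S\setminus\{e,g\}: S\in\mathcal{Q},\ e,g\in S,\ f\notin S\}$, and similarly $\mathcal{Q}^e_{fg}$. *)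

theory Defs
  imports "HOL-Analysis.Analysis"
begin

definition genpoly :: "'a set \<Rightarrow> ('a set \<Rightarrow> real) \<Rightarrow> ('a \<Rightarrow> real) \<Rightarrow> real" where
  "genpoly E \<omega> y = (\<Sum>S\<in>Pow E. \<omega> S * (\<Prod>e\<in>S. y e))"

definition pdiff :: "'a \<Rightarrow> (('a \<Rightarrow> real) \<Rightarrow> real) \<Rightarrow> ('a \<Rightarrow> real) \<Rightarrow> real" where
  "pdiff e F y = deriv (\<lambda>t. F (y(e := t))) (y e)"

definition rayleigh :: "'a set \<Rightarrow> (('a \<Rightarrow> real) \<Rightarrow> real) \<Rightarrow> bool" where
  "rayleigh E Z \<longleftrightarrow>
     (\<forall>e\<in>E. \<forall>f\<in>E. e \<noteq> f \<longrightarrow> (\<forall>y. (\<forall>x\<in>E. y x > 0) \<longrightarrow>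
        pdiff e Z y * pdiff f Z y - pdiff e (pdiff f Z) y * Z y \<ge> 0))"

definition weakly_rayleigh :: "'a set \<Rightarrow> 'a set set \<Rightarrow> bool" where
  "weakly_rayleigh E Q \<longleftrightarrow> Q \<subseteq> Pow E \<and>
     (\<exists>\<omega>. (\<forall>S\<in>Pow E. \<omega> S \<ge> 0) \<and> (\<exists>S\<in>Pow E. \<omega> S \<noteq> 0) \<and>
          {S\<in>Pow E. \<omega> S > 0} = Q \<and> rayleigh E (genpoly E \<omega>))"

text \<open>Q^f_{eg} = { S - {e,g} : S in Q, e,g in S, f notin S }.\<close>
definition minor_sys :: "'a set set \<Rightarrow> 'a \<Rightarrow> 'a \<Rightarrow> 'a \<Rightarrow> 'a set set" where
  "minor_sys Q f e g = {S - {e, g} | S. S \<in> Q \<and> e \<in> S \<and> g \<in> S \<and> f \<notin> S}"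

end

theory Submission imports Defs begin

definition H :: "'a set \<Rightarrow> ('a set \<Rightarrow> real) \<Rightarrow> 'a set \<Rightarrow> ('a \<Rightarrow> real) \<Rightarrow> real" where
  "H E c R y = (\<Sum>S\<in>Pow E. c S * (\<Prod>x\<in>S-R. y x))"

lemma prod_upd:
  assumes "finite S" "e \<in> S" "e \<notin> R"
  shows "(\<Prod>x\<in>S-R. (y(e:=t)) x) = t * (\<Prod>x\<in>S-insert e R. y x)"
proof -
  have "(\<Prod>x\<in>S-R. (y(e:=t)) x) = (y(e:=t)) e * (\<Prod>x\<in>S-R-{e}. (y(e:=t)) x)"
    using assms by (intro prod.remove) auto
  also have "(\<Prod>x\<in>S-R-{e}. (y(e:=t)) x) = (\<Prod>x\<in>S-insert e R. y x)"
    by (rule prod.cong) auto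
  finally show ?thesis by simp
qed

lemma pdiff_H:
  assumes "finite E" "e \<notin> R"
  shows "pdiff e (H E c R) y = H E (\<lambda>S. if e \<in> S then c S else 0) (insert e R) y"
proof -
  have fin: "S \<in> Pow E \<Longrightarrow> finite S" for S using assms(1) finite_subset by auto
  have "((\<lambda>t. H E c R (y(e:=t))) has_field_derivative H E (\<lambda>S. if e \<in> S then c S else 0) (insert e R) y) (at (y e))"
    unfolding H_def
  proof (rule DERIV_sum)
    fix S assume S: "S \<in> Pow E"
    show "((\<lambda>t. c S * (\<Prod>x\<in>S-R. (y(e:=t)) x)) has_field_derivative
           (if e \<in> S then c S else 0) * (\<Prod>x\<in>S-insert e R. y x)) (at (y e))"
    proof (cases "e \<in> S")
      case True
      have "(\<lambda>t. c S * (\<Prod>x\<in>S-R. (y(e:=t)) x)) = (\<lambda>t. c S * (t * (\<Prod>x\<in>S-insert e R. y x)))"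
        by (intro ext arg_cong[where f="(*) (c S)"] prod_upd[OF fin[OF S] True assms(2)])
      moreover have "((\<lambda>t. c S * (t * (\<Prod>x\<in>S-insert e R. y x))) has_field_derivative
           c S * (1 * (\<Prod>x\<in>S-insert e R. y x))) (at (y e))"
        by (auto intro!: derivative_eq_intros)
      ultimately show ?thesis using True by simp
    next
      case False
      have "(\<lambda>t. c S * (\<Prod>x\<in>S-R. (y(e:=t)) x)) = (\<lambda>t. c S * (\<Prod>x\<in>S-R. y x))"
        using False by (intro ext arg_cong2[where f="(*)"] refl prod.cong) auto
      then show ?thesis using False by simp
    qed
  qed
  then show ?thesis unfolding pdiff_def by (simp add: DERIV_imp_deriv)
qed

lemma H_split:
  assumes "finite E" "g \<notin> R" "t > 0"
  shows "H E c R ((\<lambda>_. 1)(g:=t)) = (\<Sum>S\<in>Pow E. if g \<in> S then 0 else c S) + t * (\<Sum>S\<in>Pow E. if g \<in> S then c S else 0)"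
proof -
  have fin: "S \<in> Pow E \<Longrightarrow> finite S" for S using assms(1) finite_subset by auto
  have "H E c R ((\<lambda>_. 1)(g:=t)) = (\<Sum>S\<in>Pow E. (if g \<in> S then 0 else c S) + t * (if g \<in> S then c S else 0))"
    unfolding H_def
  proof (rule sum.cong[OF refl])
    fix S assume S: "S \<in> Pow E"
    show "c S * (\<Prod>x\<in>S-R. ((\<lambda>_. 1)(g:=t)) x) = (if g \<in> S then 0 else c S) + t * (if g \<in> S then c S else 0)"
    proof (cases "g \<in> S")
      case True
      have "(\<Prod>x\<in>S-R. ((\<lambda>_. 1)(g:=t)) x) = t * (\<Prod>x\<in>S-insert g R. ((\<lambda>_. 1::real)) x)"
        by (rule prod_upd[OF fin[OF S] True assms(2)])
      then show ?thesis using True by simp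
    next
      case False
      have "(\<Prod>x\<in>S-R. ((\<lambda>_. 1)(g:=t)) x) = (\<Prod>x\<in>S-R. (1::real))"
        using False by (intro prod.cong) auto
      then show ?thesis using False by simp
    qed
  qed
  then show ?thesis by (simp add: sum.distrib sum_distrib_left)
qed

theorem lemma4p5:
  fixes E :: "'a set" and Q :: "'a set set" and A B :: "'a set" and e f g :: 'a
  assumes "finite E"
    and "weakly_rayleigh E Q"
    and "A \<in> Q" and "B \<in> Q" and "A \<inter> B = {}"
    and "e \<in> B" and "f \<in> B" and "e \<noteq> f"
    and "g \<in> A"
  shows "minor_sys Q f e g \<noteq> {} \<or> minor_sys Q e f g \<noteq> {}"
proof (rule ccontr)
  assume "\<not> ?thesis"
  then have n1: "\<And>S. S \<in> Q \<Longrightarrow> e \<in> S \<Longrightarrow> g \<in> S \<Longrightarrow> f \<in> S"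
    and n2: "\<And>S. S \<in> Q \<Longrightarrow> f \<in> S \<Longrightarrow> g \<in> S \<Longrightarrow> e \<in> S"
    unfolding minor_sys_def by blast+
  obtain \<omega> where wpos: "\<And>S. S \<in> Pow E \<Longrightarrow> \<omega> S \<ge> 0"
    and wQ: "{S\<in>Pow E. \<omega> S > 0} = Q" and ray: "rayleigh E (genpoly E \<omega>)"
    and QE: "Q \<subseteq> Pow E"
    using assms(2) unfolding weakly_rayleigh_def by blast
  have w0: "\<omega> S = 0" if S: "S \<in> Pow E" and nQ: "S \<notin> Q" for S
  proof -
    have "\<not> \<omega> S > 0" using S nQ wQ by blast
    then show ?thesis using wpos[OF S] by linarith
  qed
  have AE: "A \<in> Pow E" and BE: "B \<in> Pow E" using QE assms(3,4) by blast+
  have wA: "\<omega> A > 0" and wB: "\<omega> B > 0" using wQ assms(3,4) by blast+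
  have eE: "e \<in> E" and fE: "f \<in> E" using BE assms(6,7) by blast+
  have ge: "g \<noteq> e" and gf: "g \<noteq> f" using assms(5,6,7,9) by blast+
  have gen: "genpoly E \<omega> = H E \<omega> {}" unfolding genpoly_def H_def by simp
  define ce where "ce = (\<lambda>S. if e \<in> S then \<omega> S else 0)"
  define cf where "cf = (\<lambda>S. if f \<in> S then \<omega> S else 0)"
  define cfe where "cfe = (\<lambda>S. if e \<in> S then cf S else 0)"
  have pe: "pdiff e (genpoly E \<omega>) = H E ce {e}"
  proof
    fix y show "pdiff e (genpoly E \<omega>) y = H E ce {e} y"
      unfolding gen ce_def using pdiff_H[OF assms(1), of e "{}" \<omega> y] by simp
  qed
  have pf: "pdiff f (genpoly E \<omega>) = H E cf {f}"
  proof
    fix y show "pdiff f (genpoly E \<omega>) y = H E cf {f} y"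
      unfolding gen cf_def using pdiff_H[OF assms(1), of f "{}" \<omega> y] by simp
  qed
  have pef: "pdiff e (pdiff f (genpoly E \<omega>)) = H E cfe {e, f}"
  proof
    fix y show "pdiff e (pdiff f (genpoly E \<omega>)) y = H E cfe {e, f} y"
      unfolding pf cfe_def using pdiff_H[OF assms(1), of e "{f}" cf y] assms(8) by simp
  qed
  define lo where "lo = (\<lambda>c. (\<Sum>S\<in>Pow E. if g \<in> S then (0::real) else c S))"
  define hi where "hi = (\<lambda>c. (\<Sum>S\<in>Pow E. if g \<in> S then c S else (0::real)))"
  have key: "(lo ce + t * hi ce) * (lo cf + t * hi cf) - (lo cfe + t * hi cfe) * (lo \<omega> + t * hi \<omega>) \<ge> 0"
    if t: "t > 0" for t
  proof -
    have pos: "\<forall>x\<in>E. ((\<lambda>_. 1)(g:=t)) x > (0::real)" using t by auto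
    have r0: "pdiff e (genpoly E \<omega>) ((\<lambda>_. 1)(g:=t)) * pdiff f (genpoly E \<omega>) ((\<lambda>_. 1)(g:=t)) -
       pdiff e (pdiff f (genpoly E \<omega>)) ((\<lambda>_. 1)(g:=t)) * genpoly E \<omega> ((\<lambda>_. 1)(g:=t)) \<ge> 0"
      by (rule ray[unfolded rayleigh_def, rule_format, OF eE fE assms(8) pos[rule_format]])
    have hh: "H E c R ((\<lambda>_. 1)(g:=t)) = lo c + t * hi c" if "g \<notin> R" for c R
      unfolding lo_def hi_def by (rule H_split[OF assms(1) that t])
    have "g \<notin> {e}" "g \<notin> {f}" "g \<notin> {e,f}" "g \<notin> {}" using ge gf by auto
    note h = hh[OF this(1), of ce] hh[OF this(2), of cf] hh[OF this(3), of cfe] hh[OF this(4), of \<omega>]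
    show ?thesis using r0[unfolded pef, unfolded pe pf, unfolded gen h] .
  qed
  have fin: "finite (Pow E)" using assms(1) by simp
  have hce: "hi ce = hi cfe"
    unfolding hi_def ce_def cfe_def cf_def
    by (rule sum.cong[OF refl]) (use n1 w0 in auto)
  have hcf: "hi cf = hi cfe"
    unfolding hi_def cfe_def cf_def
    by (rule sum.cong[OF refl]) (use n2 w0 in auto)
  have sumle: "lo ce + lo cf \<le> lo \<omega> + lo cfe"
    unfolding lo_def sum.distrib[symmetric] ce_def cf_def cfe_def
    by (rule sum_mono) (use wpos in auto)
  have d1: "hi cfe \<ge> 0" unfolding hi_def cfe_def cf_def
    by (rule sum_nonneg) (use wpos in auto)
  have gB: "g \<notin> B" using assms(5,9) by blast
  have eA: "e \<notin> A" using assms(5,6) by blast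
  have d0: "lo cfe \<ge> \<omega> B"
  proof -
    have "(\<lambda>S. if g \<in> S then 0 else cfe S) B \<le> lo cfe"
      unfolding lo_def by (rule member_le_sum[OF BE _ fin]) (use wpos in \<open>auto simp: cfe_def cf_def\<close>)
    then show ?thesis using gB assms(6,7) by (simp add: cfe_def cf_def)
  qed
  have ad: "hi \<omega> - hi cfe \<ge> \<omega> A"
  proof -
    have "(\<lambda>S. (if g \<in> S then \<omega> S else 0) - (if g \<in> S then cfe S else 0)) A
         \<le> (\<Sum>S\<in>Pow E. (if g \<in> S then \<omega> S else 0) - (if g \<in> S then cfe S else 0))"
      by (rule member_le_sum[OF AE _ fin]) (use wpos in \<open>auto simp: cfe_def cf_def\<close>)
    then show ?thesis using eA assms(9) unfolding hi_def sum_subtractf by (simp add: cfe_def cf_def)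
  qed
  have a0: "lo \<omega> \<ge> 0" unfolding lo_def by (rule sum_nonneg) (use wpos in auto)
  define K where "K = lo cfe * (hi \<omega> - hi cfe)"
  have Kpos: "K > 0" unfolding K_def using d0 ad wA wB by simp
  define t where "t = (\<bar>lo ce * lo cf - lo cfe * lo \<omega>\<bar> + 1) / K"
  have tpos: "t > 0" unfolding t_def using Kpos by simp
  have tK: "t * K = \<bar>lo ce * lo cf - lo cfe * lo \<omega>\<bar> + 1" unfolding t_def using Kpos by simp
  have k: "(lo ce + t * hi cfe) * (lo cf + t * hi cfe) - (lo cfe + t * hi cfe) * (lo \<omega> + t * hi \<omega>) \<ge> 0"
    using key[OF tpos] hce hcf by simp
  have i1: "t * hi cfe * (lo ce + lo cf) \<le> t * hi cfe * (lo \<omega> + lo cfe)"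
    using sumle tpos d1 by (simp add: mult_left_mono)
  have i2: "t * t * hi cfe * hi cfe \<le> t * t * hi cfe * hi \<omega>"
    using ad wA tpos d1 by (simp add: mult_left_mono)
  have "(lo ce + t * hi cfe) * (lo cf + t * hi cfe) - (lo cfe + t * hi cfe) * (lo \<omega> + t * hi \<omega>)
     = (lo ce * lo cf - lo cfe * lo \<omega>) + t * hi cfe * (lo ce + lo cf) - t * hi cfe * (lo \<omega> + lo cfe)
       + (t * t * hi cfe * hi cfe - t * t * hi cfe * hi \<omega>) - t * K"
    unfolding K_def by (simp add: algebra_simps)
  with k i1 i2 tK show False by linarith
qed

end
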